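(* Let $n,t,k$ be integers with $n\geq 2t\geq 2$ and $k\geq 2$, and let $u$ be a word of length $t$ over $\Sigma_k=\{0,1,\ldots,k-1\}$. Then \[B_k(n,u)\leq A_k(n-2t,0^t),\] where $0^t$ denotes the word consisting of $t$ zeros.
   Context: A border of a word $w$ is a non-empty word that is both a proper prefix and a proper suffix of $w$. A word $w$ is closed by a word $u$ if $u$ is a border of $w$ and $u$ occurs exactly twice in $w$ as a factor (overlapping occurrences counted). $B_k(n,u)$ denotes the number of words of length $n$ over $\Sigma_k$ that are closed by $u$. $A_k(m,v)$ denotes the number of words of length $m$ over $\Sigma_k$ that do not contain $v$ as a factor (for $m=0$ the empty word is counted). *)

theory Defs
  imports Main "HOL-Library.Sublist"
begin

definition words :: "nat \<Rightarrow> nat \<Rightarrow> nat list set" where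
  "words k n = {w. length w = n \<and> set w \<subseteq> {..<k}}"

definition occurrences :: "nat list \<Rightarrow> nat list \<Rightarrow> nat" where
  "occurrences u w = card {i. i + length u \<le> length w \<and> take (length u) (drop i w) = u}"

definition is_border :: "nat list \<Rightarrow> nat list \<Rightarrow> bool" where
  "is_border u w \<longleftrightarrow> u \<noteq> [] \<and> strict_prefix u w \<and> strict_suffix u w"

definition closed_by :: "nat list \<Rightarrow> nat list \<Rightarrow> bool" where
  "closed_by w u \<longleftrightarrow> is_border u w \<and> occurrences u w = 2"

definition B :: "nat \<Rightarrow> nat \<Rightarrow> nat list \<Rightarrow> nat" where
  "B k n u = card {w \<in> words k n. closed_by w u}"

definition A :: "nat \<Rightarrow> nat \<Rightarrow> nat list \<Rightarrow> nat" where
  "A k m v = card {w \<in> words k m. \<not> sublist v w}"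

end

theory Submission
  imports Defs
begin

definition st :: "nat list \<Rightarrow> nat list \<Rightarrow> nat" where
  "st u x = (GREATEST l. l < length u \<and> suffix (take l u) x)"

definition sw :: "nat \<Rightarrow> nat \<Rightarrow> nat" where
  "sw e c = (if c = e then 0 else if c = 0 then e else c)"

fun enc :: "nat list \<Rightarrow> nat list \<Rightarrow> nat list \<Rightarrow> nat list" where
  "enc u x [] = []"
| "enc u x (c # cs) = sw (u ! st u x) c # enc u (x @ [c]) cs"

lemma st_props:
  assumes "u \<noteq> []"
  shows "st u x < length u \<and> suffix (take (st u x) u) x"
proof -
  have ex: "0 < length u \<and> suffix (take 0 u) x" using assms by simp
  have b: "\<forall>y. y < length u \<and> suffix (take y u) x \<longrightarrow> y \<le> length u" by simp
  show ?thesis unfolding st_def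
    using GreatestI_nat[of "\<lambda>l. l < length u \<and> suffix (take l u) x", OF ex] b by blast
qed

lemma st_ge:
  assumes "l < length u" "suffix (take l u) x"
  shows "l \<le> st u x"
  unfolding st_def
  by (rule Greatest_le_nat[where b="length u"]) (use assms in auto)

lemma sw_inv: "sw e (sw e c) = c"
  unfolding sw_def by auto

lemma sw_zero: "sw e c = 0 \<longleftrightarrow> c = e"
  unfolding sw_def by auto

lemma sw_lt: "e < k \<Longrightarrow> c < k \<Longrightarrow> sw e c < k"
  unfolding sw_def by auto

lemma enc_length [simp]: "length (enc u x cs) = length cs"
  by (induction cs arbitrary: x) auto

lemma enc_append: "enc u x (a @ b) = enc u x a @ enc u (x @ a) b"
  by (induction a arbitrary: x) auto

lemma enc_inj: "length cs = length cs' \<Longrightarrow> enc u x cs = enc u x cs' \<Longrightarrow> cs = cs'"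
proof (induction cs arbitrary: x cs')
  case Nil
  then show ?case by simp
next
  case (Cons c cs)
  then obtain c' cs2 where cs': "cs' = c' # cs2" by (cases cs') auto
  from Cons.prems cs' have "sw (u ! st u x) c = sw (u ! st u x) c'" by simp
  then have "c = c'" by (metis sw_inv)
  with Cons cs' show ?case by auto
qed

lemma enc_words:
  assumes "u \<noteq> []" "set u \<subseteq> {..<k}" "set cs \<subseteq> {..<k}"
  shows "set (enc u x cs) \<subseteq> {..<k}"
  using assms(3)
proof (induction cs arbitrary: x)
  case Nil
  then show ?case by simp
next
  case (Cons c cs)
  have "u ! st u x < k" using st_props[OF assms(1), of x] assms(2) nth_mem by blast
  then have "sw (u ! st u x) c < k" using Cons.prems by (intro sw_lt) auto
  with Cons show ?case by auto
qed

lemma zeros: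
  assumes "u \<noteq> []"
  shows "prefix (replicate r 0) (enc u x cs) \<Longrightarrow>
    (\<exists>i. 1 \<le> i \<and> i \<le> r \<and> suffix u (x @ take i cs)) \<or> st u x + r \<le> st u (x @ take r cs)"
proof (induction r arbitrary: x cs)
  case 0
  then show ?case by simp
next
  case (Suc r)
  then obtain c cs' where cs: "cs = c # cs'" by (cases cs) auto
  from Suc.prems cs have z: "sw (u ! st u x) c = 0" and p: "prefix (replicate r 0) (enc u (x @ [c]) cs')"
    by auto
  from z have c: "c = u ! st u x" by (simp add: sw_zero)
  have s: "st u x < length u" "suffix (take (st u x) u) x" using st_props[OF assms] by auto
  have suf: "suffix (take (Suc (st u x)) u) (x @ [c])"
    using s c by (simp add: take_Suc_conv_app_nth)
  show ?case
  proof (cases "Suc (st u x) = length u")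
    case True
    then have "suffix u (x @ take 1 cs)" using suf cs by simp
    then show ?thesis by auto
  next
    case False
    then have le: "Suc (st u x) \<le> st u (x @ [c])" using suf s by (intro st_ge) auto
    from Suc.IH[OF p] show ?thesis
    proof
      assume "\<exists>i\<ge>1. i \<le> r \<and> suffix u ((x @ [c]) @ take i cs')"
      then obtain i where "1 \<le> i" "i \<le> r" "suffix u ((x @ [c]) @ take i cs')" by blast
      then show ?thesis using cs by (intro disjI1 exI[of _ "Suc i"]) auto
    next
      assume "st u (x @ [c]) + r \<le> st u ((x @ [c]) @ take r cs')"
      then show ?thesis using le cs by auto
    qed
  qed
qed


lemma decomp:
  assumes "prefix u w" "suffix u w" "2 * length u \<le> length w"
  shows "w = u @ drop (length u) (take (length w - length u) w) @ u"
proof -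
  obtain r where r: "w = u @ r" using assms(1) prefix_def by blast
  obtain p where p: "w = p @ u" using assms(2) suffix_def by blast
  have tp: "take (length w - length u) w = p" using p by simp
  have "length u \<le> length p" using p assms(3) by simp
  then have "p = u @ drop (length u) p" using r p
    by (metis append_eq_append_conv_if append_take_drop_id)
  then show ?thesis using tp p by (metis append_assoc)
qed

lemma occ3:
  assumes w: "w = u @ z @ u" and u: "u \<noteq> []"
    and q: "1 \<le> q" "q \<le> length z" and suf: "suffix u (u @ take q z)"
  shows "3 \<le> occurrences u w"
proof -
  let ?O = "{i. i + length u \<le> length w \<and> take (length u) (drop i w) = u}"
  have fin: "finite ?O" by (rule finite_subset[of _ "{..length w}"]) auto
  have "0 \<in> ?O" using w by simp
  moreover have "length z + length u \<in> ?O" using w by simp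
  moreover have "q \<in> ?O"
  proof -
    obtain p' where p': "u @ take q z = p' @ u" using suf suffix_def by blast
    have lp: "length p' = q" using p' q by (metis add_right_cancel length_append length_take min.absorb2 add.commute)
    have "w = (u @ take q z) @ (drop q z @ u)" using w by simp
    also have "\<dots> = p' @ u @ (drop q z @ u)" using p' by simp
    finally have dq: "drop q w = u @ (drop q z @ u)" using lp by simp
    have "take (length u) (drop q w) = u" unfolding dq by simp
    moreover have "q + length u \<le> length w" using w q by simp
    ultimately show ?thesis by simp
  qed
  ultimately have "{0, q, length z + length u} \<subseteq> ?O" by auto
  then have "card {0, q, length z + length u} \<le> card ?O" using fin by (rule card_mono[rotated])
  moreover have "card {0, q, length z + length u} = 3"
  proof -
    have "0 < length u" using u by simp
    then have "q \<noteq> length z + length u" "0 \<noteq> length z + length u" "0 \<noteq> q" using q by linarith+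
    then show ?thesis by simp
  qed
  ultimately show ?thesis unfolding occurrences_def by simp
qed

lemma enc_avoid:
  assumes u: "u \<noteq> []" and w: "occurrences u (u @ z @ u) = 2"
  shows "\<not> sublist (replicate (length u) 0) (enc u u z)"
proof
  assume "sublist (replicate (length u) 0) (enc u u z)"
  then obtain a b where ab: "enc u u z = a @ replicate (length u) 0 @ b" unfolding sublist_def by blast
  let ?j = "length a"
  have lz: "?j + length u \<le> length z" using arg_cong[OF ab, of length] by simp
  have "enc u u z = enc u u (take ?j z) @ enc u (u @ take ?j z) (drop ?j z)"
    by (metis enc_append append_take_drop_id)
  moreover have "length (enc u u (take ?j z)) = ?j" using lz by simp
  ultimately have "enc u (u @ take ?j z) (drop ?j z) = replicate (length u) 0 @ b"
    using ab by (metis append_eq_append_conv)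
  then have "prefix (replicate (length u) 0) (enc u (u @ take ?j z) (drop ?j z))" by simp
  from zeros[OF u this] st_props[OF u, of "(u @ take ?j z) @ take (length u) (drop ?j z)"]
  obtain i where i: "1 \<le> i" "i \<le> length u" "suffix u ((u @ take ?j z) @ take i (drop ?j z))"
    by fastforce
  have "suffix u (u @ take (?j + i) z)" using i(3) by (simp add: take_add)
  then have "3 \<le> occurrences u (u @ z @ u)"
    using i lz by (intro occ3[OF refl u, of "?j + i"]) auto
  then show False using w by simp
qed

theorem lemma6:
  fixes n t k :: nat and u :: "nat list"
  assumes "n \<ge> 2 * t" and "2 * t \<ge> 2" and "k \<ge> 2"
    and "u \<in> words k t"
  shows "B k n u \<le> A k (n - 2 * t) (replicate t 0)"
proof -
  have lu: "length u = t" and su: "set u \<subseteq> {..<k}" using assms(4) unfolding words_def by auto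
  have une: "u \<noteq> []" using lu assms(2) by auto
  define S where "S = {w \<in> words k n. closed_by w u}"
  define T where "T = {w \<in> words k (n - 2 * t). \<not> sublist (replicate t 0) w}"
  define zz where "zz = (\<lambda>w::nat list. drop t (take (n - t) w))"
  define g where "g = (\<lambda>w. enc u u (zz w))"
  have dec: "w = u @ zz w @ u" and lz: "length (zz w) = n - 2 * t"
    and sz: "set (zz w) \<subseteq> {..<k}" and occ: "occurrences u (u @ zz w @ u) = 2"
    if "w \<in> S" for w
  proof -
    from that have wk: "length w = n" "set w \<subseteq> {..<k}" and cl: "closed_by w u"
      unfolding S_def words_def by auto
    from cl have "prefix u w" "suffix u w" "occurrences u w = 2"
      unfolding closed_by_def is_border_def strict_prefix_def strict_suffix_def by simp_all
    then show d: "w = u @ zz w @ u"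
      using decomp[of u w] wk assms(1) lu unfolding zz_def by auto
    show "length (zz w) = n - 2 * t" using wk assms(1) unfolding zz_def by simp
    show "set (zz w) \<subseteq> {..<k}" using wk unfolding zz_def
      by (meson in_set_dropD in_set_takeD subset_iff)
    show "occurrences u (u @ zz w @ u) = 2" using d \<open>occurrences u w = 2\<close> by simp
  qed
  have inj: "inj_on g S"
  proof
    fix w w' assume "w \<in> S" "w' \<in> S" "g w = g w'"
    then have e: "enc u u (zz w) = enc u u (zz w')" unfolding g_def by simp
    have "length (zz w) = length (zz w')" using lz \<open>w \<in> S\<close> \<open>w' \<in> S\<close> by simp
    then have "zz w = zz w'" using e by (rule enc_inj)
    moreover have "w = u @ zz w @ u" by (rule dec) fact
    moreover have "w' = u @ zz w' @ u" by (rule dec) fact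
    ultimately show "w = w'" by simp
  qed
  have img: "g ` S \<subseteq> T"
  proof
    fix y assume "y \<in> g ` S"
    then obtain w where w: "w \<in> S" "y = g w" by blast
    have "set y \<subseteq> {..<k}" using enc_words[OF une su sz[OF w(1)]] w unfolding g_def by simp
    moreover have "length y = n - 2 * t" using w lz unfolding g_def by simp
    moreover have "\<not> sublist (replicate t 0) y"
      using enc_avoid[OF une occ[OF w(1)]] w lu unfolding g_def by simp
    ultimately show "y \<in> T" unfolding T_def words_def by simp
  qed
  have finT: "finite T"
  proof (rule finite_subset)
    show "T \<subseteq> {xs. set xs \<subseteq> {..<k} \<and> length xs = n - 2 * t}" unfolding T_def words_def by auto
    show "finite {xs. set xs \<subseteq> {..<k} \<and> length xs = n - 2 * t}"
      by (rule finite_lists_length_eq) simp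
  qed
  have "card S \<le> card T" using card_inj_on_le[OF inj img finT] .
  then show ?thesis unfolding B_def A_def S_def T_def .
qed

end
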